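(* Let $\mathcal S$ be an aperiodic primitive qubit spin substitution in $\mathbb Z^m$ given by $(Q,\mathcal D,G,W)$. There is a unitary matrix $V$, independent of $\vec k$, such that for all $\vec k\in\mathbb R^m$ $$V^{*}B(\vec k)V=\bigoplus_{\chi\in\widehat G}B_\chi(\vec k).$$ Moreover, if $\mathcal S$ is $\chi$-unitary, then $B_\chi(\vec k)=\sqrt{|\det Q|}\,U(\vec k)$ with $U(\vec k)$ unitary, and consequently the Lyapunov exponent of the cocycle generated by $B_\chi$ satisfies $\lambda^{B_\chi}(\vec k)=\log\sqrt{|\det Q|}$ for all $\vec k\in\mathbb R^m$.
   Context: $Q$ is an expansive endomorphism of $\mathbb Z^m$ and $\mathcal D$ a complete set of coset representatives of $\mathbb Z^m/Q\mathbb Z^m$ (so $|\mathcal D|=|\det Q|$). Spin substitution: finite abelian group $G$, $W:\mathcal D\times\mathcal D\to G$, alphabet $\mathcal A=G\times\mathcal D$ with letters $g\mathsf d$, $\mathcal S(g\mathsf d,\vec d')=(gW(\vec d,\vec d'))\mathsf d'$; primitive = substitution matrix has a positive power; aperiodic = no configuration of the (nonempty) generated subshift has a nonzero period. Fourier matrix: the $\mathcal A\times\mathcal A$ matrix $B(\vec k)_{\mathsf a\mathsf b}=\sum_{\vec x\in T_{\mathsf a\mathsf b}}e^{2\pi i\langle\vec k,\vec x\rangle}$ with $T_{\mathsf a\mathsf b}=\{\vec x\in\mathcal D:\mathcal S(\mathsf b,\vec x)=\mathsf a\}$. For $\chi\in\widehat G$, $B_\chi(\vec k)$ is the $\mathcal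 D\times\mathcal D$ matrix with entries $B_\chi(\vec k)_{\vec d,\vec d'}=e^{2\pi i\langle\vec k,\vec d\rangle}\chi(W(\vec d',\vec d))$. For a matrix function $A$, the cocycle is $A^{(n)}(\vec k)=A(\vec k)A(Q^T\vec k)\cdots A((Q^T)^{n-1}\vec k)$ and the (maximal) Lyapunov exponent is $\lambda^A(\vec k)=\limsup_{n\to\infty}\frac1n\log\|A^{(n)}(\vec k)\|$. $\mathcal S$ is $\chi$-unitary if $\frac{1}{\sqrt{|\mathcal D|}}(\chi(W(\vec d,\vec d')))$ is unitary. *)

theory Defs
  imports "HOL-Analysis.Analysis"
begin

section \<open>Integer lattice data\<close>

definition rvec :: "int^'n \<Rightarrow> real^'n" where
  "rvec x = (\<chi> i. real_of_int (x $ i))"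

definition rmat :: "int^'n^'n \<Rightarrow> real^'n^'n" where
  "rmat Q = (\<chi> i j. real_of_int (Q $ i $ j))"

definition cmat :: "int^'n^'n \<Rightarrow> complex^'n^'n" where
  "cmat Q = (\<chi> i j. complex_of_int (Q $ i $ j))"

text \<open>Expansive: every (complex) eigenvalue of Q has modulus greater than 1.\<close>
definition expansive :: "int^'n^'n \<Rightarrow> bool" where
  "expansive Q \<longleftrightarrow>
     (\<forall>(l::complex) (v::complex^'n). v \<noteq> 0 \<and> cmat Q *v v = l *s v \<longrightarrow> 1 < norm l)"

text \<open>D is a complete set of coset representatives of Z^m / Q Z^m.\<close>
definition coset_reps :: "int^'n^'n \<Rightarrow> (int^'n) set \<Rightarrow> bool" where
  "coset_reps Q D \<longleftrightarrow> (\<forall>x. \<exists>!d. d \<in> D \<and> (\<exists>y. x - d = Q *v y))"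

definition digit :: "int^'n^'n \<Rightarrow> (int^'n) set \<Rightarrow> int^'n \<Rightarrow> int^'n" where
  "digit Q D z = (THE d. d \<in> D \<and> (\<exists>y. z - d = Q *v y))"

definition quot :: "int^'n^'n \<Rightarrow> (int^'n) set \<Rightarrow> int^'n \<Rightarrow> int^'n" where
  "quot Q D z = (THE y. z - digit Q D z = Q *v y)"

section \<open>Characters of a finite abelian group\<close>

definition character :: "('g::ab_group_add \<Rightarrow> complex) \<Rightarrow> bool" where
  "character ch \<longleftrightarrow> (\<forall>a b. ch (a + b) = ch a * ch b) \<and> (\<forall>a. norm (ch a) = 1)"

definition dual_group :: "('g::ab_group_add \<Rightarrow> complex) set" where
  "dual_group = {ch. character ch}"

section \<open>Spin substitution\<close>

text \<open>Letters g d are pairs (g, d); the alphabet is G \<times> D.\<close>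
definition alphabet :: "(int^'n) set \<Rightarrow> ('g \<times> (int^'n)) set" where
  "alphabet D = UNIV \<times> D"

definition subst :: "(int^'n \<Rightarrow> int^'n \<Rightarrow> 'g::ab_group_add) \<Rightarrow> 'g \<times> (int^'n) \<Rightarrow> int^'n \<Rightarrow> 'g \<times> (int^'n)" where
  "subst W a d' = (fst a + W (snd a) d', d')"

section \<open>Matrices indexed by finite sets (as functions)\<close>

definition mmul :: "'j set \<Rightarrow> ('i \<Rightarrow> 'j \<Rightarrow> 'a::comm_semiring_1) \<Rightarrow> ('j \<Rightarrow> 'k \<Rightarrow> 'a) \<Rightarrow> 'i \<Rightarrow> 'k \<Rightarrow> 'a" where
  "mmul J A B i k = (\<Sum>j\<in>J. A i j * B j k)"

definition idm :: "'i \<Rightarrow> 'i \<Rightarrow> 'a::comm_semiring_1" where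
  "idm i j = (if i = j then 1 else 0)"

primrec mpow :: "'i set \<Rightarrow> ('i \<Rightarrow> 'i \<Rightarrow> 'a::comm_semiring_1) \<Rightarrow> nat \<Rightarrow> 'i \<Rightarrow> 'i \<Rightarrow> 'a" where
  "mpow I M 0 = idm"
| "mpow I M (Suc n) = mmul I M (mpow I M n)"

definition adj :: "('i \<Rightarrow> 'j \<Rightarrow> complex) \<Rightarrow> 'j \<Rightarrow> 'i \<Rightarrow> complex" where
  "adj V j i = cnj (V i j)"

text \<open>V with rows indexed by R and columns indexed by C is unitary.\<close>
definition unitary_on :: "'i set \<Rightarrow> 'j set \<Rightarrow> ('i \<Rightarrow> 'j \<Rightarrow> complex) \<Rightarrow> bool" where
  "unitary_on R C V \<longleftrightarrow> finite R \<and> finite C \<and>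
     (\<forall>c\<in>C. \<forall>c'\<in>C. mmul R (adj V) V c c' = idm c c') \<and>
     (\<forall>r\<in>R. \<forall>r'\<in>R. mmul C V (adj V) r r' = idm r r')"

text \<open>Block diagonal (direct sum) of a family of D\<times>D matrices indexed by characters.\<close>
definition block_diag :: "('c \<Rightarrow> 'i \<Rightarrow> 'i \<Rightarrow> complex) \<Rightarrow> 'c \<times> 'i \<Rightarrow> 'c \<times> 'i \<Rightarrow> complex" where
  "block_diag Bs x y = (if fst x = fst y then Bs (fst x) (snd x) (snd y) else 0)"

section \<open>Substitution matrix, primitivity, subshift, aperiodicity\<close>

definition subst_matrix :: "(int^'n) set \<Rightarrow> (int^'n \<Rightarrow> int^'n \<Rightarrow> 'g::ab_group_add)
    \<Rightarrow> 'g \<times> (int^'n) \<Rightarrow> 'g \<times> (int^'n) \<Rightarrow> nat" where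
  "subst_matrix D W a b = card {x \<in> D. subst W b x = a}"

definition primitive :: "(int^'n) set \<Rightarrow> (int^'n \<Rightarrow> int^'n \<Rightarrow> 'g::ab_group_add) \<Rightarrow> bool" where
  "primitive D W \<longleftrightarrow> (\<exists>n>0. \<forall>a\<in>alphabet D. \<forall>b\<in>alphabet D.
       0 < mpow (alphabet D) (subst_matrix D W) n a b)"

text \<open>n-th iterate of the substitution applied to a single letter placed at the origin,
  as a partial patch: S(P)(Q x + d) = S(P(x), d).\<close>
primrec subst_pow :: "int^'n^'n \<Rightarrow> (int^'n) set \<Rightarrow> (int^'n \<Rightarrow> int^'n \<Rightarrow> 'g::ab_group_add)
    \<Rightarrow> nat \<Rightarrow> 'g \<times> (int^'n) \<Rightarrow> int^'n \<Rightarrow> ('g \<times> (int^'n)) option" where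
  "subst_pow Q D W 0 a = (\<lambda>z. if z = 0 then Some a else None)"
| "subst_pow Q D W (Suc n) a = (\<lambda>z. case subst_pow Q D W n a (quot Q D z) of
       None \<Rightarrow> None | Some b \<Rightarrow> Some (subst W b (digit Q D z)))"

text \<open>The subshift generated by S: configurations all of whose finite patches are legal.\<close>
definition subshift :: "int^'n^'n \<Rightarrow> (int^'n) set \<Rightarrow> (int^'n \<Rightarrow> int^'n \<Rightarrow> 'g::ab_group_add)
    \<Rightarrow> (int^'n \<Rightarrow> 'g \<times> (int^'n)) set" where
  "subshift Q D W = {c. (\<forall>z. c z \<in> alphabet D) \<and>
     (\<forall>F. finite F \<longrightarrow> (\<exists>n a t. a \<in> alphabet D \<and>
         (\<forall>z\<in>F. subst_pow Q D W n a (z + t) = Some (c z))))}"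

definition aperiodic :: "int^'n^'n \<Rightarrow> (int^'n) set \<Rightarrow> (int^'n \<Rightarrow> int^'n \<Rightarrow> 'g::ab_group_add) \<Rightarrow> bool" where
  "aperiodic Q D W \<longleftrightarrow> subshift Q D W \<noteq> {} \<and>
     (\<forall>c\<in>subshift Q D W. \<forall>p. p \<noteq> 0 \<longrightarrow> \<not> (\<forall>z. c (z + p) = c z))"

section \<open>Fourier matrices\<close>

definition fourier_matrix :: "(int^'n) set \<Rightarrow> (int^'n \<Rightarrow> int^'n \<Rightarrow> 'g::ab_group_add) \<Rightarrow> real^'n
    \<Rightarrow> 'g \<times> (int^'n) \<Rightarrow> 'g \<times> (int^'n) \<Rightarrow> complex" where
  "fourier_matrix D W k a b =
     (\<Sum>x\<in>{x \<in> D. subst W b x = a}. exp (2 * of_real pi * \<i> * of_real (k \<bullet> rvec x)))"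

definition B_chi :: "(int^'n \<Rightarrow> int^'n \<Rightarrow> 'g) \<Rightarrow> ('g \<Rightarrow> complex) \<Rightarrow> real^'n
    \<Rightarrow> int^'n \<Rightarrow> int^'n \<Rightarrow> complex" where
  "B_chi W ch k d d' = exp (2 * of_real pi * \<i> * of_real (k \<bullet> rvec d)) * ch (W d' d)"

definition chi_unitary :: "(int^'n) set \<Rightarrow> (int^'n \<Rightarrow> int^'n \<Rightarrow> 'g) \<Rightarrow> ('g \<Rightarrow> complex) \<Rightarrow> bool" where
  "chi_unitary D W ch \<longleftrightarrow>
     unitary_on D D (\<lambda>d d'. ch (W d d') / of_real (sqrt (real (card D))))"

section \<open>Cocycles and Lyapunov exponents\<close>

text \<open>A^(n)(k) = A(k) A(T k) ... A(T^(n-1) k), with T = Q^T.\<close>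
primrec cocycle :: "(real^'n \<Rightarrow> 'i \<Rightarrow> 'i \<Rightarrow> complex) \<Rightarrow> real^'n^'n \<Rightarrow> 'i set \<Rightarrow> nat
    \<Rightarrow> real^'n \<Rightarrow> 'i \<Rightarrow> 'i \<Rightarrow> complex" where
  "cocycle A T I 0 k = idm"
| "cocycle A T I (Suc n) k = mmul I (A k) (cocycle A T I n (T *v k))"

text \<open>Operator norm induced by the Euclidean norm on C^I.\<close>
definition opnorm :: "'i set \<Rightarrow> ('i \<Rightarrow> 'i \<Rightarrow> complex) \<Rightarrow> real" where
  "opnorm I M = Sup {sqrt (\<Sum>i\<in>I. (cmod (\<Sum>j\<in>I. M i j * v j))\<^sup>2) | v.
                       (\<Sum>j\<in>I. (cmod (v j))\<^sup>2) \<le> 1}"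

definition lyapunov :: "(real^'n \<Rightarrow> 'i \<Rightarrow> 'i \<Rightarrow> complex) \<Rightarrow> real^'n^'n \<Rightarrow> 'i set \<Rightarrow> real^'n \<Rightarrow> ereal" where
  "lyapunov A T I k = limsup (\<lambda>n. ereal (ln (opnorm I (cocycle A T I n k)) / real n))"

end

theory Submission
  imports Defs
begin

proposition
 fixes f :: "real^'n \<Rightarrow> real^'n"
  assumes "linear f" "S \<in> lmeasurable"
  shows measurable_linear_image_gen: "(f ` S) \<in> lmeasurable"
    and measure_linear_image_gen: "measure lebesgue (f ` S) = \<bar>det (matrix f)\<bar> * measure lebesgue S" (is "?Q f S")
proof -
  have "\<forall>S \<in> lmeasurable. (f ` S) \<in> lmeasurable \<and> ?Q f S"
  proof (rule induct_linear_elementary [OF \<open>linear f\<close>]; intro ballI)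
    fix f g and S :: "(real,'n) vec set"
    assume "linear f" and "linear g"
      and f [rule_format]: "\<forall>S \<in> lmeasurable. f ` S \<in> lmeasurable \<and> ?Q f S"
      and g [rule_format]: "\<forall>S \<in> lmeasurable. g ` S \<in> lmeasurable \<and> ?Q g S"
      and S: "S \<in> lmeasurable"
    then have gS: "g ` S \<in> lmeasurable"
      by blast
    show "(f \<circ> g) ` S \<in> lmeasurable \<and> ?Q (f \<circ> g) S"
      using f [OF gS] g [OF S] matrix_compose [OF \<open>linear g\<close> \<open>linear f\<close>]
      by (simp add: o_def image_comp abs_mult det_mul)
  next
    fix f :: "real^'n::_ \<Rightarrow> real^'n::_" and i and S :: "(real^'n::_) set"
    assume "linear f" and 0: "\<And>x. f x $ i = 0" and "S \<in> lmeasurable"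
    then have "\<not> inj f"
      by (metis (full_types) linear_injective_imp_surjective one_neq_zero surjE vec_component)
    have detf: "det (matrix f) = 0"
      using \<open>\<not> inj f\<close> det_nz_iff_inj[OF \<open>linear f\<close>] by blast
    show "f ` S \<in> lmeasurable \<and> ?Q f S"
    proof
      show "f ` S \<in> lmeasurable"
        using lmeasurable_iff_indicator_has_integral \<open>linear f\<close> \<open>\<not> inj f\<close> negligible_UNIV negligible_linear_singular_image by blast
      have "measure lebesgue (f ` S) = 0"
        by (meson \<open>\<not> inj f\<close> \<open>linear f\<close> negligible_imp_measure0 negligible_linear_singular_image)
      also have "\<dots> = \<bar>det (matrix f)\<bar> * measure lebesgue S"
        by (simp add: detf)
      finally show "?Q f S" .
    qed
  next
    fix c and S :: "(real^'n::_) set"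
    assume "S \<in> lmeasurable"
    show "(\<lambda>a. \<chi> i. c i * a $ i) ` S \<in> lmeasurable \<and> ?Q (\<lambda>a. \<chi> i. c i * a $ i) S"
    proof
      show "(\<lambda>a. \<chi> i. c i * a $ i) ` S \<in> lmeasurable"
        by (simp add: \<open>S \<in> lmeasurable\<close> measurable_stretch)
      show "?Q (\<lambda>a. \<chi> i. c i * a $ i) S"
        by (simp add: measure_stretch [OF \<open>S \<in> lmeasurable\<close>, of c] axis_def matrix_def det_diagonal)
    qed
  next
    fix m :: "'n" and n :: "'n" and S :: "(real, 'n) vec set"
    assume "m \<noteq> n" and "S \<in> lmeasurable"
    let ?h = "\<lambda>v::(real, 'n) vec. \<chi> i. v $ Transposition.transpose m n i"
    have lin: "linear ?h"
      by (rule linearI) (simp_all add: plus_vec_def scaleR_vec_def)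
    have meq: "measure lebesgue ((\<lambda>v::(real, 'n) vec. \<chi> i. v $ Transposition.transpose m n i) ` cbox a b)
             = measure lebesgue (cbox a b)" for a b
    proof (cases "cbox a b = {}")
      case True then show ?thesis
        by simp
    next
      case False
      then have him: "?h ` (cbox a b) \<noteq> {}"
        by blast
      have eq: "?h ` (cbox a b) = cbox (?h a) (?h b)"
        by (auto simp: image_iff lambda_swap_Galois mem_box_cart) (metis transpose_involutory)+
      show ?thesis
        using him prod.permute [OF permutes_swap_id, where S=UNIV and g="\<lambda>i. (b - a)$i", symmetric]
        by (simp add: eq content_cbox_cart False)
    qed
    have "(\<chi> i j. if Transposition.transpose m n i = j then 1 else 0) = (\<chi> i j. if j = Transposition.transpose m n i then 1 else (0::real))"
      by (auto intro!: Cart_lambda_cong)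
    then have "matrix ?h = transpose(\<chi> i j. mat 1 $ i $ Transposition.transpose m n j)"
      by (auto simp: matrix_eq transpose_def axis_def mat_def matrix_def)
    then have 1: "\<bar>det (matrix ?h)\<bar> = 1"
      by (simp add: det_permute_columns permutes_swap_id sign_swap_id abs_mult)
    show "?h ` S \<in> lmeasurable \<and> ?Q ?h S"
      using measure_linear_sufficient [OF lin \<open>S \<in> lmeasurable\<close>] meq 1 by force
  next
    fix m n :: "'n" and S :: "(real, 'n) vec set"
    assume "m \<noteq> n" and "S \<in> lmeasurable"
    let ?h = "\<lambda>v::(real, 'n) vec. \<chi> i. if i = m then v $ m + v $ n else v $ i"
    have lin: "linear ?h"
      by (rule linearI) (auto simp: algebra_simps plus_vec_def scaleR_vec_def vec_eq_iff)
    have "matrix ?h = (\<chi> k. if k = m then row m (mat 1) + 1 *s row n (mat 1) else row k (mat 1))"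
      by (auto simp: matrix_def vec_eq_iff row_def mat_def axis_def)
    then have 1: "det(matrix ?h) = 1"
      using det_row_operation[OF \<open>m \<noteq> n\<close>, of "mat 1 :: real^'n^'n" 1] by simp
    have meq: "measure lebesgue (?h ` (cbox a b)) = measure lebesgue (cbox a b)" for a b
    proof (cases "cbox a b = {}")
      case True then show ?thesis by simp
    next
      case False
      then have ne: "(+) (\<chi> i. if i = n then - a $ n else 0) ` cbox a b \<noteq> {}"
        by auto
      let ?v = "\<chi> i. if i = n then - a $ n else 0"
      have "?h ` cbox a b
            = (+) (\<chi> i. if i = m \<or> i = n then a $ n else 0) ` ?h ` (+) ?v ` (cbox a b)"
        using \<open>m \<noteq> n\<close> unfolding image_comp o_def by (force simp: vec_eq_iff)
      then have "measure lebesgue (?h ` (cbox a b))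
               = measure lebesgue ((\<lambda>v. \<chi> i. if i = m then v $ m + v $ n else v $ i) `
                                   (+) ?v ` cbox a b)"
        by (rule ssubst) (rule measure_translation)
      also have "\<dots> = measure lebesgue ((\<lambda>v. \<chi> i. if i = m then v $ m + v $ n else v $ i) ` cbox (?v +a) (?v + b))"
        by (metis (no_types, lifting) cbox_translation)
      also have "\<dots> = measure lebesgue ((+) ?v ` cbox a b)"
        apply (subst measure_shear_interval)
        using \<open>m \<noteq> n\<close> ne apply auto
        apply (simp add: cbox_translation)
        by (metis cbox_borel cbox_translation measure_completion sets_lborel)
      also have "\<dots> = measure lebesgue (cbox a b)"
        by (rule measure_translation)
        finally show ?thesis .
      qed
    show "?h ` S \<in> lmeasurable \<and> ?Q ?h S"
      using measure_linear_sufficient [OF lin \<open>S \<in> lmeasurable\<close>] meq 1 by force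
  qed
  with assms show "(f ` S) \<in> lmeasurable" "?Q f S"
    by metis+
qed


definition flr :: "real^'n \<Rightarrow> int^'n" where
  "flr x = (\<chi> i. \<lfloor>x $ i\<rfloor>)"

definition unitP :: "(real^'n) set" where
  "unitP = {x. \<forall>i. 0 \<le> x $ i \<and> x $ i < 1}"

lemma rvec_add: "rvec (a + b) = rvec a + rvec b"
  by (simp add: rvec_def vec_eq_iff)
lemma rvec_diff: "rvec (a - b) = rvec a - rvec b"
  by (simp add: rvec_def vec_eq_iff)
lemma rvec_minus: "rvec (- a) = - rvec a"
  by (simp add: rvec_def vec_eq_iff)
lemma rvec_inj: "rvec a = rvec b \<longleftrightarrow> a = b"
  by (simp add: rvec_def vec_eq_iff)
lemma rvec_mult: "rvec (Q *v y) = rmat Q *v rvec y"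
  by (simp add: rvec_def rmat_def vec_eq_iff matrix_vector_mult_def)

lemma flr_diff: "flr (x - rvec z) = flr x - z"
  by (simp add: flr_def rvec_def vec_eq_iff)

lemma floor_comp_iff: "(0 \<le> a - real_of_int k \<and> a - real_of_int k < 1) \<longleftrightarrow> k = \<lfloor>a\<rfloor>"
  by (metis diff_ge_0_iff_ge diff_less_eq add.commute floor_unique le_floor_iff of_int_floor_le real_of_int_floor_add_one_gt)

lemma in_unitP_iff: "x - rvec z \<in> unitP \<longleftrightarrow> z = flr x"
  unfolding unitP_def flr_def rvec_def vec_eq_iff using floor_comp_iff by simp

lemma unitP_sets: "unitP \<in> sets lebesgue"
proof -
  have "unitP = (\<Inter>i. {x::real^'n. 0 \<le> x $ i} \<inter> {x. x $ i < 1})"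
    by (auto simp: unitP_def)
  moreover have "{x::real^'n. 0 \<le> x $ i} \<in> sets lebesgue" for i
    using borel_closed[OF closed_halfspace_component_ge_cart[where i=i and a=0]] sets_completionI_sets[of _ lborel] by simp
  moreover have "{x::real^'n. x $ i < 1} \<in> sets lebesgue" for i
    using borel_open[OF open_halfspace_component_lt_cart[where i=i and a=1]] sets_completionI_sets[of _ lborel] by simp
  ultimately show ?thesis by (metis (no_types, lifting) sets.finite_INT[of UNIV] sets.Int finite UNIV_not_empty)
qed

lemma unitP_bounded: "unitP \<subseteq> cbox 0 1"
  by (auto simp: unitP_def mem_box_cart less_imp_le)

lemma unitP_lmeasurable: "unitP \<in> lmeasurable"
  by (meson bounded_cbox bounded_set_imp_lmeasurable bounded_subset unitP_bounded unitP_sets)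

lemma measure_unitP: "measure lebesgue (unitP :: (real^'n) set) = 1"
proof -
  have "measure lebesgue (unitP :: (real^'n) set) \<le> measure lebesgue (cbox (0::real^'n) 1)"
    by (intro measure_mono_fmeasurable unitP_bounded unitP_sets) auto
  moreover have "measure lebesgue (box (0::real^'n) 1) \<le> measure lebesgue (unitP :: (real^'n) set)"
    by (intro measure_mono_fmeasurable unitP_lmeasurable) (auto simp: unitP_def mem_box_cart less_imp_le)
  moreover have c1: "measure lebesgue (cbox (0::real^'n) 1) = 1"
  proof -
    have "(0::real^'n) \<in> cbox 0 1" by (auto simp: mem_box_cart)
    then have "cbox (0::real^'n) 1 \<noteq> {}" by blast
    then show ?thesis by (simp add: content_cbox_cart)
  qed
  moreover have "measure lebesgue (box (0::real^'n) 1) = 1"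
  proof -
    have "measure lebesgue (box (0::real^'n) 1) = measure lborel (box (0::real^'n) 1)"
      by (simp add: measure_completion)
    also have "\<dots> = measure lborel (cbox (0::real^'n) 1)" by (simp only: measure_lborel_box_eq measure_lborel_cbox_eq)
    also have "\<dots> = 1" using c1 by (simp add: measure_completion)
    finally show ?thesis .
  qed
  ultimately show ?thesis by linarith
qed

lemma finite_int_box: "finite {z::int^'n. \<forall>i. \<bar>z $ i\<bar> \<le> K}"
proof -
  have "{z::int^'n. \<forall>i. \<bar>z $ i\<bar> \<le> K} \<subseteq> vec_lambda ` (PiE UNIV (\<lambda>_. {-K..K}))"
  proof
    fix z :: "int^'n" assume "z \<in> {z::int^'n. \<forall>i. \<bar>z $ i\<bar> \<le> K}"
    then have "(\<lambda>i. z $ i) \<in> PiE UNIV (\<lambda>_. {-K..K})" by (auto simp: abs_le_iff minus_le_iff)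
    then show "z \<in> vec_lambda ` (PiE UNIV (\<lambda>_. {-K..K}))"
      by (metis image_eqI vec_lambda_eta)
  qed
  then show ?thesis by (rule finite_subset) (intro finite_imageI finite_PiE; simp)
qed

lemma lmeas_finite: "A \<in> lmeasurable \<Longrightarrow> emeasure lebesgue A \<noteq> \<infinity>"
  by (metis fmeasurableD2 infinity_ennreal_def)

lemma fund_domain_measure:
  fixes F :: "(real^'n) set"
  assumes Fm: "F \<in> lmeasurable" and Fb: "bounded F" and uniq: "\<And>x. \<exists>!z. x - rvec z \<in> F"
  shows "measure lebesgue F = 1"
proof -
  obtain R where R: "\<And>x. x \<in> F \<Longrightarrow> norm x \<le> R" using Fb bounded_iff by blast
  define K where "K = \<lceil>R\<rceil> + 1"
  define Z where "Z = {z::int^'n. \<forall>i. \<bar>z $ i\<bar> \<le> K}"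
  have finZ: "finite Z" unfolding Z_def by (rule finite_int_box)
  have inZ: "flr x \<in> Z" if "x \<in> F" for x
  proof -
    have "\<bar>x $ i\<bar> \<le> R" for i using R[OF that] component_le_norm_cart[of x i] by linarith
    then have "\<bar>\<lfloor>x $ i\<rfloor>\<bar> \<le> K" for i unfolding K_def
    proof -
      fix i
      have a: "x $ i \<le> R" "- R \<le> x $ i" using \<open>\<bar>x $ i\<bar> \<le> R\<close> by auto
      have "\<lfloor>x $ i\<rfloor> \<le> \<lfloor>R\<rfloor>" using floor_mono[OF a(1)] .
      moreover have "\<lfloor>R\<rfloor> \<le> \<lceil>R\<rceil>" by (rule floor_le_ceiling)
      moreover have "\<lfloor>- R\<rfloor> \<le> \<lfloor>x $ i\<rfloor>" using floor_mono[OF a(2)] .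
      moreover have "\<lfloor>- R\<rfloor> = - \<lceil>R\<rceil>" by (simp add: ceiling_def)
      ultimately show "\<bar>\<lfloor>x $ i\<rfloor>\<bar> \<le> \<lceil>R\<rceil> + 1" by linarith
    qed
    then show ?thesis by (simp add: Z_def flr_def)
  qed
  define A where "A z = F \<inter> (+) (rvec z) ` unitP" for z
  define G where "G z = {p \<in> unitP. p + rvec z \<in> F}" for z
  have Am: "A z \<in> lmeasurable" for z
    unfolding A_def by (intro fmeasurable_Int_fmeasurable Fm fmeasurableD measurable_translation unitP_lmeasurable)
  have AG: "(\<lambda>x. x - rvec z) ` A z = G z" for z
  proof
    show "(\<lambda>x. x - rvec z) ` A z \<subseteq> G z" by (auto simp: A_def G_def add.commute)
    show "G z \<subseteq> (\<lambda>x. x - rvec z) ` A z"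
    proof
      fix p assume "p \<in> G z"
      then have "p + rvec z \<in> A z" "p = (p + rvec z) - rvec z" by (auto simp: A_def G_def add.commute)
      then show "p \<in> (\<lambda>x. x - rvec z) ` A z" by blast
    qed
  qed
  have Gm: "G z \<in> lmeasurable" for z using AG[of z] measurable_translation_subtract[OF Am] by metis
  have measAG: "measure lebesgue (A z) = measure lebesgue (G z)" for z
    using AG[of z] measure_translation_subtract by metis
  have FA: "F = (\<Union>z\<in>Z. A z)"
  proof
    show "F \<subseteq> (\<Union>z\<in>Z. A z)"
    proof
      fix x assume x: "x \<in> F"
      have "x - rvec (flr x) \<in> unitP" using in_unitP_iff by blast
      then have "x \<in> A (flr x)" using x unfolding A_def by (auto intro!: image_eqI[of _ _ "x - rvec (flr x)"])
      then show "x \<in> (\<Union>z\<in>Z. A z)" using inZ[OF x] by blast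
    qed
    show "(\<Union>z\<in>Z. A z) \<subseteq> F" by (auto simp: A_def)
  qed
  have disjA: "disjoint_family_on A Z"
  unfolding disjoint_family_on_def
  proof (intro ballI impI)
    fix z z' :: "int^'n" assume "z \<noteq> z'"
    show "A z \<inter> A z' = {}"
    proof (rule ccontr)
      assume "A z \<inter> A z' \<noteq> {}"
      then obtain x where "x \<in> A z" "x \<in> A z'" by blast
      then have "x - rvec z \<in> unitP" "x - rvec z' \<in> unitP" by (auto simp: A_def) (metis add_diff_cancel_left')
      then have "z = flr x" "z' = flr x" using in_unitP_iff by blast+
      with \<open>z \<noteq> z'\<close> show False by simp
    qed
  qed
  have PG: "unitP = (\<Union>z\<in>Z. G z)"
  proof
    show "unitP \<subseteq> (\<Union>z\<in>Z. G z)"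
    proof
      fix p :: "real^'n" assume p: "p \<in> unitP"
      obtain w where w: "p - rvec w \<in> F" using uniq by blast
      have e: "p + rvec (- w) = p - rvec w" by (simp add: rvec_minus)
      have "(p + rvec (-w)) - rvec (-w) \<in> unitP" using p by simp
      then have "- w = flr (p + rvec (-w))" using in_unitP_iff by blast
      then have "- w \<in> Z" using inZ[of "p + rvec (-w)"] w e by simp
      moreover have "p \<in> G (-w)" using p w e by (simp add: G_def)
      ultimately show "p \<in> (\<Union>z\<in>Z. G z)" by blast
    qed
    show "(\<Union>z\<in>Z. G z) \<subseteq> unitP" by (auto simp: G_def)
  qed
  have disjG: "disjoint_family_on G Z"
  unfolding disjoint_family_on_def
  proof (intro ballI impI)
    fix z z' :: "int^'n" assume "z \<noteq> z'"
    show "G z \<inter> G z' = {}"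
    proof (rule ccontr)
      assume "G z \<inter> G z' \<noteq> {}"
      then obtain p where "p \<in> G z" "p \<in> G z'" by blast
      then have "p - rvec (-z) \<in> F" "p - rvec (-z') \<in> F" by (auto simp: G_def rvec_minus)
      then have "-z = -z'" using uniq by blast
      with \<open>z \<noteq> z'\<close> show False by simp
    qed
  qed
  have "measure lebesgue F = (\<Sum>z\<in>Z. measure lebesgue (A z))"
    unfolding FA using finZ disjA fmeasurableD[OF Am] lmeas_finite[OF Am]
    by (intro measure_finite_Union) blast+
  also have "\<dots> = (\<Sum>z\<in>Z. measure lebesgue (G z))" by (simp add: measAG)
  also have "\<dots> = measure lebesgue (unitP :: (real^'n) set)"
  proof -
    have "measure lebesgue (\<Union>z\<in>Z. G z) = (\<Sum>z\<in>Z. measure lebesgue (G z))"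
      using finZ disjG fmeasurableD[OF Gm] lmeas_finite[OF Gm]
      by (intro measure_finite_Union) blast+
    then show ?thesis using PG by simp
  qed
  also have "\<dots> = 1" by (rule measure_unitP)
  finally show ?thesis .
qed


lemma card_reps_det:
  fixes Q :: "int^'n^'n" and D :: "(int^'n) set"
  assumes reps: "coset_reps Q D" and finD: "finite D" and det: "det (rmat Q) \<noteq> 0"
  shows "real (card D) = \<bar>det (rmat Q)\<bar>"
proof -
  define T where "T = rmat Q"
  have "invertible T" using det invertible_det_nz unfolding T_def by blast
  then obtain Ti where TTi: "T ** Ti = mat 1" and TiT: "Ti ** T = mat 1" unfolding invertible_def by blast
  define E where "E = {e::real^'n. flr e \<in> D}"
  define B where "B d = (+) (rvec d) ` unitP" for d :: "int^'n"
  have EB: "E = (\<Union>d\<in>D. B d)"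
  proof
    show "E \<subseteq> (\<Union>d\<in>D. B d)"
    proof
      fix e assume "e \<in> E"
      then have "flr e \<in> D" by (simp add: E_def)
      moreover have "e - rvec (flr e) \<in> unitP" using in_unitP_iff by blast
      then have "e \<in> B (flr e)" unfolding B_def by (auto intro!: image_eqI[of _ _ "e - rvec (flr e)"])
      ultimately show "e \<in> (\<Union>d\<in>D. B d)" by blast
    qed
    show "(\<Union>d\<in>D. B d) \<subseteq> E"
    proof
      fix e assume "e \<in> (\<Union>d\<in>D. B d)"
      then obtain d p where "d \<in> D" "p \<in> unitP" "e = rvec d + p" by (auto simp: B_def)
      then have "e - rvec d \<in> unitP" by simp
      then have "d = flr e" using in_unitP_iff by blast
      with \<open>d \<in> D\<close> show "e \<in> E" by (simp add: E_def)
    qed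
  qed
  have Bm: "B d \<in> lmeasurable" for d unfolding B_def by (intro measurable_translation unitP_lmeasurable)
  have measB: "measure lebesgue (B d) = 1" for d unfolding B_def by (simp add: measure_translation measure_unitP)
  have disjB: "disjoint_family_on B D"
    unfolding disjoint_family_on_def
  proof (intro ballI impI)
    fix d d' :: "int^'n" assume "d \<noteq> d'"
    show "B d \<inter> B d' = {}"
    proof (rule ccontr)
      assume "B d \<inter> B d' \<noteq> {}"
      then obtain x where "x \<in> B d" "x \<in> B d'" by blast
      then have "x - rvec d \<in> unitP" "x - rvec d' \<in> unitP" by (auto simp: B_def) (metis add_diff_cancel_left')
      then have "d = flr x" "d' = flr x" using in_unitP_iff by blast+
      with \<open>d \<noteq> d'\<close> show False by simp
    qed
  qed
  have measE: "measure lebesgue E = real (card D)"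
  proof -
    have "measure lebesgue (\<Union>d\<in>D. B d) = (\<Sum>d\<in>D. measure lebesgue (B d))"
      using finD disjB fmeasurableD[OF Bm] lmeas_finite[OF Bm]
      by (intro measure_finite_Union) blast+
    then show ?thesis using EB measB by simp
  qed
  have Ebd: "bounded E"
  proof -
    have "bounded (B d)" for d unfolding B_def
      by (rule bounded_translation) (meson bounded_cbox bounded_subset unitP_bounded)
    then show ?thesis unfolding EB using finD by (intro bounded_UN) auto
  qed
  have Em: "E \<in> lmeasurable"
    using Ebd unfolding EB using finD fmeasurableD[OF Bm]
    by (intro bounded_set_imp_lmeasurable sets.finite_UN) auto
  define F where "F = (*v) Ti ` E"
  have Fm: "F \<in> lmeasurable" unfolding F_def
    by (intro measurable_linear_image_gen Em) (simp add: matrix_vector_mul_linear)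
  have Fb: "bounded F" unfolding F_def by (intro bounded_linear_image Ebd) simp
  have TF: "(*v) T ` F = E"
    unfolding F_def image_comp o_def matrix_vector_mul_assoc TTi by simp
  have inF: "v \<in> F \<longleftrightarrow> T *v v \<in> E" for v
  proof
    assume "v \<in> F" then show "T *v v \<in> E" using TF by blast
  next
    assume "T *v v \<in> E"
    moreover have "v = Ti *v (T *v v)" by (simp add: matrix_vector_mul_assoc TiT)
    ultimately show "v \<in> F" unfolding F_def by blast
  qed
  have key: "x - rvec y \<in> F \<longleftrightarrow> flr (T *v x) - Q *v y \<in> D" for x y
  proof -
    have "T *v (x - rvec y) = T *v x - rvec (Q *v y)"
      by (simp add: rvec_mult T_def matrix_vector_mult_diff_distrib)
    then show ?thesis using inF[of "x - rvec y"] by (simp add: E_def flr_diff)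
  qed
  have injQ: "y = y'" if "Q *v y = Q *v y'" for y y'
  proof -
    have "T *v rvec y = T *v rvec y'" using that by (metis T_def rvec_mult)
    then have "Ti *v (T *v rvec y) = Ti *v (T *v rvec y')" by simp
    then have "rvec y = rvec y'" by (simp add: matrix_vector_mul_assoc TiT)
    then show ?thesis by (simp add: rvec_inj)
  qed
  have uniq: "\<exists>!y. x - rvec y \<in> F" for x
  proof -
    define w where "w = flr (T *v x)"
    have "\<exists>!d. d \<in> D \<and> (\<exists>y. w - d = Q *v y)" using reps unfolding coset_reps_def by (rule spec)
    then obtain d where d: "d \<in> D" "\<exists>y. w - d = Q *v y"
      and du: "\<And>d'. d' \<in> D \<and> (\<exists>y. w - d' = Q *v y) \<Longrightarrow> d' = d"
      by (elim ex1E) blast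
    obtain y where y: "w - d = Q *v y" using d by blast
    have "w - Q *v y = d" using y by (simp add: algebra_simps)
    then have ex: "x - rvec y \<in> F" using key d by (simp add: w_def)
    have "y' = y" if "x - rvec y' \<in> F" for y'
    proof -
      have "w - Q *v y' \<in> D" using that key by (simp add: w_def)
      moreover have "w - (w - Q *v y') = Q *v y'" by simp
      ultimately have "w - Q *v y' = d" using du[of "w - Q *v y'"] by blast
      then have "Q *v y' = Q *v y"
      proof -
        assume a: "w - Q *v y' = d"
        have "Q *v y' = w - (w - Q *v y')" by simp
        also have "\<dots> = w - d" using a by simp
        also have "\<dots> = Q *v y" using \<open>w - Q *v y = d\<close> by (simp add: algebra_simps)
        finally show ?thesis .
      qed
      then show ?thesis by (rule injQ)
    qed
    then show ?thesis using ex by (intro ex1I[where a=y])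
  qed
  have mF: "measure lebesgue F = 1" by (rule fund_domain_measure[OF Fm Fb uniq])
  have "measure lebesgue ((*v) T ` F) = \<bar>det (matrix ((*v) T))\<bar> * measure lebesgue F"
    by (intro measure_linear_image_gen Fm) (simp add: matrix_vector_mul_linear)
  then have "measure lebesgue E = \<bar>det T\<bar>" using TF mF by simp
  then show ?thesis using measE T_def by simp
qed



lemma two_elem:
  assumes "CARD('g::{ab_group_add,finite}) = 2"
  shows "\<exists>a :: 'g. a \<noteq> 0 \<and> UNIV = {0, a} \<and> a + a = 0"
proof -
  have "\<exists>a::'g. a \<noteq> 0"
  proof (rule ccontr)
    assume "\<not> (\<exists>a::'g. a \<noteq> 0)"
    then have "(UNIV::'g set) = {0}" by auto
    then have "card (UNIV::'g set) = card {0::'g}" by (simp only:)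
    then have "CARD('g) = 1" by simp
    then show False using assms by simp
  qed
  then obtain a :: 'g where a: "a \<noteq> 0" by blast
  have "card {0, a} = 2" using a by simp
  then have U: "UNIV = {0, a}" using assms by (metis card_subset_eq finite subset_UNIV)
  have "a + a \<in> {0, a}" using U by blast
  moreover have "a + a \<noteq> a" using a by simp
  ultimately have "a + a = 0" by blast
  with a U show ?thesis by blast
qed

definition chi1 :: "'g::ab_group_add \<Rightarrow> complex" where
  "chi1 x = (if x = 0 then 1 else -1)"

definition chi0 :: "'g::ab_group_add \<Rightarrow> complex" where
  "chi0 x = 1"

lemma dual_group_two:
  assumes "CARD('g::{ab_group_add,finite}) = 2"
  shows "(dual_group :: ('g \<Rightarrow> complex) set) = {chi0, chi1}" and "(chi0 :: 'g \<Rightarrow> complex) \<noteq> chi1"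
proof -
  obtain a :: 'g where a: "a \<noteq> 0" "UNIV = {0, a}" "a + a = 0" using two_elem[OF assms] by blast
  have x: "x = 0 \<or> x = a" for x :: 'g using a(2) by blast
  show "(chi0 :: 'g \<Rightarrow> complex) \<noteq> chi1"
  proof
    assume "(chi0 :: 'g \<Rightarrow> complex) = chi1"
    then have "chi0 a = chi1 a" by simp
    then show False using a by (simp add: chi0_def chi1_def)
  qed
  have c0: "character (chi0 :: 'g \<Rightarrow> complex)" by (simp add: character_def chi0_def)
  have c1: "character (chi1 :: 'g \<Rightarrow> complex)"
    unfolding character_def
  proof (intro conjI allI)
    fix x y :: 'g
    show "chi1 (x + y) = chi1 x * chi1 y"
      using x[of x] x[of y] a by (auto simp: chi1_def)
    show "norm (chi1 x) = 1" by (simp add: chi1_def)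
  qed
  have "ch = chi0 \<or> ch = chi1" if ch: "character (ch :: 'g \<Rightarrow> complex)" for ch
  proof -
    have m: "ch (x + y) = ch x * ch y" "norm (ch x) = 1" for x y using ch by (auto simp: character_def)
    have "ch 0 = ch 0 * ch 0" using m(1)[of 0 0] by simp
    moreover have "ch 0 \<noteq> 0" using m(2)[of 0] by auto
    ultimately have c0: "ch 0 = 1" by (metis mult_cancel_left1)
    have "ch a * ch a = 1" using m(1)[of a a] a(3) c0 by simp
    then have "ch a = 1 \<or> ch a = -1" by (metis power2_eq_square square_eq_1_iff)
    then show ?thesis
    proof
      assume "ch a = 1" then have "ch = chi0" using x c0 by (auto simp: chi0_def fun_eq_iff) (metis x)
      then show ?thesis by simp
    next
      assume "ch a = -1" then have "ch = chi1" using x c0 a(1) by (auto simp: chi1_def fun_eq_iff)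
      then show ?thesis by simp
    qed
  qed
  then show "(dual_group :: ('g \<Rightarrow> complex) set) = {chi0, chi1}"
    using c0 c1 by (auto simp: dual_group_def)
qed



lemma reps_nonempty: "coset_reps Q D \<Longrightarrow> D \<noteq> {}"
  unfolding coset_reps_def by blast

lemma prim_finite:
  fixes D :: "(int^'n) set" and W :: "int^'n \<Rightarrow> int^'n \<Rightarrow> 'g::{ab_group_add,finite}"
  assumes prim: "primitive D W" and ne: "D \<noteq> {}"
  shows "finite D"
proof (rule ccontr)
  assume inf: "infinite D"
  then have infA: "infinite (alphabet D :: ('g \<times> (int^'n)) set)"
    unfolding alphabet_def using finite_cartesian_productD2 by blast
  obtain n where n: "n > 0" and pos: "\<forall>a\<in>alphabet D. \<forall>b\<in>alphabet D. 0 < mpow (alphabet D) (subst_matrix D W) n a b"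
    using prim unfolding primitive_def by blast
  obtain m where m: "n = Suc m" using n gr0_implies_Suc by blast
  obtain d where d: "d \<in> D" using ne by blast
  have aA: "((0::'g), d) \<in> alphabet D" using d by (simp add: alphabet_def)
  have "mpow (alphabet D) (subst_matrix D W) n (0, d) (0, d) = 0"
    using infA by (simp add: m mmul_def)
  with pos aA show False by fastforce
qed

lemma det_nz:
  fixes Q :: "int^'n^'n"
  assumes "expansive Q"
  shows "det (rmat Q) \<noteq> 0"
proof
  assume "det (rmat Q) = 0"
  then have "\<not> inj ((*v) (rmat Q))"
    using det_nz_iff_inj[of "(*v) (rmat Q)"] by (simp add: matrix_vector_mul_linear)
  then obtain v where v: "v \<noteq> 0" "rmat Q *v v = 0"
    by (metis linear_injective_0 matrix_vector_mul_linear)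
  define vc where "vc = (\<chi> i. complex_of_real (v $ i))"
  have "vc \<noteq> 0" using v(1) by (simp add: vc_def vec_eq_iff)
  moreover have "cmat Q *v vc = 0 *s vc"
  proof -
    have "(cmat Q *v vc) $ i = complex_of_real ((rmat Q *v v) $ i)" for i
      by (simp add: cmat_def rmat_def vc_def matrix_vector_mult_def)
    then show ?thesis using v(2) by (simp add: vec_eq_iff)
  qed
  ultimately have "1 < norm (0::complex)" using assms unfolding expansive_def by blast
  then show False by simp
qed



definition ex :: "real^'n \<Rightarrow> int^'n \<Rightarrow> complex" where
  "ex k d = exp (2 * of_real pi * \<i> * of_real (k \<bullet> rvec d))"

lemma fourier_explicit:
  "fourier_matrix D W k (g, e) (g', e') = (if e \<in> D \<and> g = g' + W e' e then ex k e else 0)"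
proof -
  have "{x \<in> D. subst W (g', e') x = (g, e)} = (if e \<in> D \<and> g = g' + W e' e then {e} else {})"
    by (auto simp: subst_def)
  then show ?thesis by (simp add: fourier_matrix_def ex_def)
qed

lemma B_chi_ex: "B_chi W ch k d d' = ex k d * ch (W d' d)"
  by (simp add: B_chi_def ex_def)

definition Vm :: "'g \<times> (int^'n) \<Rightarrow> ('g \<Rightarrow> complex) \<times> (int^'n) \<Rightarrow> complex" where
  "Vm p q = (if snd p = snd q then fst q (fst p) / complex_of_real (sqrt 2) else 0)"

lemma sum_alpha:
  "finite D \<Longrightarrow> (\<Sum>p\<in>alphabet D. f p) = (\<Sum>g\<in>UNIV. \<Sum>e\<in>D. f (g, e))"
  unfolding alphabet_def by (simp add: sum.cartesian_product)

lemma sum_dualD: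
  "finite D \<Longrightarrow> finite C \<Longrightarrow> (\<Sum>p\<in>C \<times> D. f p) = (\<Sum>c\<in>C. \<Sum>e\<in>D. f (c, e))"
  by (simp add: sum.cartesian_product)

lemma sum_prod_delta:
  fixes A B :: "int^'n \<Rightarrow> complex"
  assumes "finite D" "d \<in> D"
  shows "(\<Sum>e\<in>D. (if d = e then A e else 0) * (if d' = e then B e else 0)) = (if d = d' then A d * B d else 0)"
proof -
  have "(\<Sum>e\<in>D. (if d = e then A e else 0) * (if d' = e then B e else 0))
      = (\<Sum>e\<in>D. if d = e then (if d = d' then A e * B e else 0) else 0)"
    by (intro sum.cong) auto
  also have "\<dots> = (if d = d' then A d * B d else 0)" using assms by (simp add: sum.delta)
  finally show ?thesis .
qed

lemma sum_mult_delta: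
  fixes F Y :: "int^'n \<Rightarrow> complex"
  assumes "finite D" "d \<in> D"
  shows "(\<Sum>e\<in>D. F e * (if e = d then Y e else 0)) = F d * Y d"
proof -
  have "(\<Sum>e\<in>D. F e * (if e = d then Y e else 0)) = (\<Sum>e\<in>D. if e = d then F e * Y e else 0)"
    by (intro sum.cong) auto
  also have "\<dots> = F d * Y d" using assms by (simp add: sum.delta)
  finally show ?thesis .
qed

lemma s2: "complex_of_real (sqrt 2) * complex_of_real (sqrt 2) = 2"
proof -
  have "complex_of_real (sqrt 2) * complex_of_real (sqrt 2) = complex_of_real (sqrt 2 * sqrt 2)"
    by (simp only: of_real_mult)
  also have "\<dots> = 2" by simp
  finally show ?thesis .
qed

lemma blockdiag:
  fixes D :: "(int^'n) set" and W :: "int^'n \<Rightarrow> int^'n \<Rightarrow> 'g::{ab_group_add,finite}"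
  assumes qubit: "CARD('g) = 2" and finD: "finite D"
  shows "unitary_on (alphabet D) (dual_group \<times> D) (Vm :: 'g \<times> (int^'n) \<Rightarrow> ('g \<Rightarrow> complex) \<times> (int^'n) \<Rightarrow> complex) \<and>
            (\<forall>k. \<forall>x\<in>dual_group \<times> D. \<forall>y\<in>dual_group \<times> D.
               mmul (alphabet D) (adj Vm) (mmul (alphabet D) (fourier_matrix D W k) Vm) x y
                 = block_diag (\<lambda>ch. B_chi W ch k) x y)"
proof -
  obtain a :: 'g where a: "a \<noteq> 0" "UNIV = {0, a}" "a + a = 0" using two_elem[OF qubit] by blast
  have x: "x = 0 \<or> x = a" for x :: 'g using a(2) by blast
  have dual: "(dual_group :: ('g \<Rightarrow> complex) set) = {chi0, chi1}" "(chi0 :: 'g \<Rightarrow> complex) \<noteq> chi1"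
    using dual_group_two[OF qubit] by auto
  have sumG: "(\<Sum>g\<in>UNIV. f g) = f 0 + f a" for f :: "'g \<Rightarrow> complex"
  proof -
    have "(\<Sum>g\<in>UNIV. f g) = (\<Sum>g\<in>{0,a}. f g)" by (rule arg_cong[where f="sum f"], rule a(2))
    also have "\<dots> = f 0 + f a" using a(1) by simp
    finally show ?thesis .
  qed
  have sumC: "(\<Sum>c\<in>dual_group. f c) = f chi0 + f chi1" for f :: "('g \<Rightarrow> complex) \<Rightarrow> complex"
  proof -
    have "(\<Sum>c\<in>dual_group. f c) = (\<Sum>c\<in>{chi0,chi1}. f c)" by (rule arg_cong[where f="sum f"], rule dual(1))
    also have "\<dots> = f chi0 + f chi1" using dual(2) by simp
    finally show ?thesis .
  qed
  have c1a: "chi1 a = -1" "chi1 (0::'g) = 1" "chi0 (x::'g) = 1" for x using a by (auto simp: chi1_def chi0_def)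
  have finA: "finite (alphabet D :: ('g \<times> (int^'n)) set)" using finD by (simp add: alphabet_def)
  have finC: "finite (dual_group \<times> D :: (('g \<Rightarrow> complex) \<times> (int^'n)) set)" by (rule finite_cartesian_product) (simp_all add: dual(1) finD)
  have U1: "mmul (alphabet D) (adj Vm) Vm c c' = idm c c'"
    if cc: "c \<in> dual_group \<times> D" "c' \<in> dual_group \<times> D" for c c' :: "('g \<Rightarrow> complex) \<times> (int^'n)"
  proof -
    obtain ch d ch' d' where c: "c = (ch, d)" "c' = (ch', d')" "ch \<in> {chi0, chi1}" "ch' \<in> {chi0, chi1}" "d \<in> D" "d' \<in> D"
      using cc dual by auto
    have "mmul (alphabet D) (adj Vm) Vm c c'
        = (\<Sum>g\<in>UNIV. \<Sum>e\<in>D. (if d = e then cnj (ch g) / complex_of_real (sqrt 2) else 0) * (if d' = e then ch' g / complex_of_real (sqrt 2) else 0))"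
      unfolding mmul_def sum_alpha[OF finD] c adj_def Vm_def by (intro sum.cong refl) auto
    also have "\<dots> = (if d = d' then (cnj (ch 0) * ch' 0 + cnj (ch a) * ch' a) / 2 else 0)"
      by (simp add: sum_prod_delta[OF finD c(5)] sumG s2 add_divide_distrib)
    also have "\<dots> = idm c c'"
      using c dual(2) by (auto simp: idm_def c1a)
    finally show ?thesis .
  qed
  have U2: "mmul (dual_group \<times> D) Vm (adj Vm) r r' = idm r r'"
    if rr: "r \<in> alphabet D" "r' \<in> alphabet D" for r r' :: "'g \<times> (int^'n)"
  proof -
    obtain g d g' d' where c: "r = (g, d)" "r' = (g', d')" "d \<in> D" "d' \<in> D"
      using rr by (auto simp: alphabet_def)
    have "mmul (dual_group \<times> D) Vm (adj Vm) r r'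
        = (\<Sum>ch\<in>dual_group. \<Sum>e\<in>D. (if d = e then ch g / complex_of_real (sqrt 2) else 0) * (if d' = e then cnj (ch g') / complex_of_real (sqrt 2) else 0))"
      unfolding mmul_def sum_dualD[OF finD, of dual_group] c adj_def Vm_def using finC
      by (simp add: sum.cartesian_product) (intro sum.cong refl; auto)
    also have "\<dots> = (if d = d' then (chi0 g * cnj (chi0 g') + chi1 g * cnj (chi1 g')) / 2 else 0)"
      by (simp add: sum_prod_delta[OF finD c(3)] sumC s2 add_divide_distrib)
    also have "\<dots> = idm r r'"
      using c x[of g] x[of g'] a(1) by (auto simp: idm_def c1a)
    finally show ?thesis .
  qed
  have BV: "mmul (alphabet D) (adj Vm) (mmul (alphabet D) (fourier_matrix D W k) Vm) x y
                 = block_diag (\<lambda>ch. B_chi W ch k) x y"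
    if xy: "x \<in> dual_group \<times> D" "y \<in> dual_group \<times> D" for k x y
  proof -
    obtain ch d ch' d' where c: "x = (ch, d)" "y = (ch', d')" "ch \<in> {chi0, chi1}" "ch' \<in> {chi0, chi1}" "d \<in> D" "d' \<in> D"
      using xy dual by auto
    define s where "s = complex_of_real (sqrt 2)"
    define w where "w = W d' d"
    have inner: "mmul (alphabet D) (fourier_matrix D W k) Vm (g, e) (ch', d')
        = (\<Sum>g'\<in>UNIV. (if e \<in> D \<and> g = g' + W d' e then ex k e else 0) * (ch' g' / s))" for g e
      unfolding mmul_def sum_alpha[OF finD]
    proof (intro sum.cong refl)
      fix g' assume "g' \<in> (UNIV :: 'g set)"
      show "(\<Sum>e'\<in>D. fourier_matrix D W k (g, e) (g', e') * Vm (g', e') (ch', d'))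
          = (if e \<in> D \<and> g = g' + W d' e then ex k e else 0) * (ch' g' / s)"
        unfolding fourier_explicit Vm_def s_def snd_conv fst_conv
        by (rule sum_mult_delta[OF finD c(6)])
    qed
    have "mmul (alphabet D) (adj Vm) (mmul (alphabet D) (fourier_matrix D W k) Vm) x y
        = (\<Sum>g\<in>UNIV. (cnj (ch g) / s) * mmul (alphabet D) (fourier_matrix D W k) Vm (g, d) (ch', d'))"
      unfolding mmul_def[of "alphabet D" "adj Vm"] sum_alpha[OF finD] c(1,2)
    proof (intro sum.cong refl)
      fix g assume "g \<in> (UNIV :: 'g set)"
      have "(\<Sum>e\<in>D. adj Vm (ch, d) (g, e) * mmul (alphabet D) (fourier_matrix D W k) Vm (g, e) (ch', d'))
         = (\<Sum>e\<in>D. mmul (alphabet D) (fourier_matrix D W k) Vm (g, e) (ch', d') * (if e = d then cnj (ch g) / s else 0))"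
        by (intro sum.cong refl) (auto simp: adj_def Vm_def s_def)
      also have "\<dots> = (cnj (ch g) / s) * mmul (alphabet D) (fourier_matrix D W k) Vm (g, d) (ch', d')"
        by (simp add: sum_mult_delta[OF finD c(5)])
      finally show "(\<Sum>e\<in>D. adj Vm (ch, d) (g, e) * mmul (alphabet D) (fourier_matrix D W k) Vm (g, e) (ch', d'))
         = (cnj (ch g) / s) * mmul (alphabet D) (fourier_matrix D W k) Vm (g, d) (ch', d')" .
    qed
    also have "\<dots> = (\<Sum>g\<in>UNIV. (cnj (ch g) / s) * (\<Sum>g'\<in>UNIV. (if g = g' + w then ex k d else 0) * (ch' g' / s)))"
      unfolding inner using c(5) by (simp add: w_def)
    also have "\<dots> = block_diag (\<lambda>ch. B_chi W ch k) x y"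
      unfolding sumG block_diag_def c(1,2) fst_conv snd_conv B_chi_ex w_def[symmetric]
      using x[of w] c(3,4) dual(2) a(1,3) s2
      by (auto simp: c1a s_def field_simps)
    finally show ?thesis .
  qed
  have "unitary_on (alphabet D) (dual_group \<times> D) (Vm :: 'g \<times> (int^'n) \<Rightarrow> ('g \<Rightarrow> complex) \<times> (int^'n) \<Rightarrow> complex)"
    unfolding unitary_on_def using finA finC U1 U2 by simp
  moreover have "\<forall>k. \<forall>x\<in>dual_group \<times> D. \<forall>y\<in>dual_group \<times> D.
               mmul (alphabet D) (adj Vm) (mmul (alphabet D) (fourier_matrix D W k) Vm) x y
                 = block_diag (\<lambda>ch. B_chi W ch k) x y"
    using BV by simp
  ultimately show ?thesis by (rule conjI)
qed



definition isom :: "'i set \<Rightarrow> ('i \<Rightarrow> 'i \<Rightarrow> complex) \<Rightarrow> bool" where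
  "isom I M \<longleftrightarrow> (\<forall>v. (\<Sum>i\<in>I. (cmod (\<Sum>j\<in>I. M i j * v j))\<^sup>2) = (\<Sum>j\<in>I. (cmod (v j))\<^sup>2))"

lemma cmod_sq: "complex_of_real ((cmod z)\<^sup>2) = z * cnj z"
  by (rule complex_norm_square)

lemma unitary_isom:
  assumes U: "unitary_on I I U"
  shows "isom I U"
  unfolding isom_def
proof
  fix v :: "'a \<Rightarrow> complex"
  have fin: "finite I" using U by (simp add: unitary_on_def)
  have orth: "(\<Sum>i\<in>I. cnj (U i l) * U i j) = idm l j" if "l \<in> I" "j \<in> I" for l j
    using U that by (auto simp: unitary_on_def mmul_def adj_def)
  have "complex_of_real (\<Sum>i\<in>I. (cmod (\<Sum>j\<in>I. U i j * v j))\<^sup>2)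
      = (\<Sum>i\<in>I. (\<Sum>j\<in>I. U i j * v j) * cnj (\<Sum>l\<in>I. U i l * v l))"
    by (simp only: of_real_sum cmod_sq)
  also have "\<dots> = (\<Sum>i\<in>I. \<Sum>l\<in>I. \<Sum>j\<in>I. (v j * cnj (v l)) * (cnj (U i l) * U i j))"
    by (simp add: sum_distrib_left sum_distrib_right mult_ac)
  also have "\<dots> = (\<Sum>l\<in>I. \<Sum>i\<in>I. \<Sum>j\<in>I. (v j * cnj (v l)) * (cnj (U i l) * U i j))"
    by (rule sum.swap)
  also have "\<dots> = (\<Sum>l\<in>I. \<Sum>j\<in>I. \<Sum>i\<in>I. (v j * cnj (v l)) * (cnj (U i l) * U i j))"
    by (intro sum.cong refl sum.swap)
  also have "\<dots> = (\<Sum>l\<in>I. \<Sum>j\<in>I. (v j * cnj (v l)) * idm l j)"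
    by (intro sum.cong refl) (simp add: orth flip: sum_distrib_left)
  also have "\<dots> = (\<Sum>l\<in>I. v l * cnj (v l))"
    using fin by (simp add: idm_def sum.delta sum.delta' if_distrib cong: if_cong)
  also have "\<dots> = complex_of_real (\<Sum>j\<in>I. (cmod (v j))\<^sup>2)"
    by (simp only: of_real_sum cmod_sq)
  finally show "(\<Sum>i\<in>I. (cmod (\<Sum>j\<in>I. U i j * v j))\<^sup>2) = (\<Sum>j\<in>I. (cmod (v j))\<^sup>2)"
    using of_real_eq_iff by blast
qed


lemma isom_mmul:
  assumes fin: "finite I" and A: "isom I A" and B: "isom I B"
  shows "isom I (mmul I A B)"
  unfolding isom_def
proof
  fix v :: "'a \<Rightarrow> complex"
  define w where "w e = (\<Sum>j\<in>I. B e j * v j)" for e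
  have "(\<Sum>j\<in>I. mmul I A B i j * v j) = (\<Sum>e\<in>I. A i e * w e)" for i
  proof -
    have "(\<Sum>j\<in>I. mmul I A B i j * v j) = (\<Sum>j\<in>I. \<Sum>e\<in>I. A i e * (B e j * v j))"
      by (simp add: mmul_def sum_distrib_right sum_distrib_left mult_ac)
    also have "\<dots> = (\<Sum>e\<in>I. \<Sum>j\<in>I. A i e * (B e j * v j))" by (rule sum.swap)
    also have "\<dots> = (\<Sum>e\<in>I. A i e * w e)" by (simp add: w_def sum_distrib_left)
    finally show ?thesis .
  qed
  then have "(\<Sum>i\<in>I. (cmod (\<Sum>j\<in>I. mmul I A B i j * v j))\<^sup>2) = (\<Sum>i\<in>I. (cmod (\<Sum>e\<in>I. A i e * w e))\<^sup>2)"
    by simp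
  also have "\<dots> = (\<Sum>e\<in>I. (cmod (w e))\<^sup>2)" using A unfolding isom_def by blast
  also have "\<dots> = (\<Sum>j\<in>I. (cmod (v j))\<^sup>2)" using B unfolding isom_def w_def by blast
  finally show "(\<Sum>i\<in>I. (cmod (\<Sum>j\<in>I. mmul I A B i j * v j))\<^sup>2) = (\<Sum>j\<in>I. (cmod (v j))\<^sup>2)" .
qed

lemma sum_idm:
  assumes "finite I" "i \<in> I"
  shows "(\<Sum>j\<in>I. idm i j * v j) = (v i :: complex)"
proof -
  have "(\<Sum>j\<in>I. idm i j * v j) = (\<Sum>j\<in>I. if i = j then v j else 0)"
    by (intro sum.cong) (auto simp: idm_def)
  then show ?thesis using assms by (simp add: sum.delta)
qed

lemma isom_idm: "finite I \<Longrightarrow> isom I idm"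
  unfolding isom_def by (simp add: sum_idm)

lemma cocycle_scaled:
  fixes A :: "real^'n \<Rightarrow> 'i \<Rightarrow> 'i \<Rightarrow> complex"
  assumes fin: "finite I"
    and hyp: "\<And>k. \<exists>U. isom I U \<and> (\<forall>d\<in>I. \<forall>d'\<in>I. A k d d' = complex_of_real c * U d d')"
  shows "\<exists>M. isom I M \<and> (\<forall>d\<in>I. \<forall>d'\<in>I. cocycle A T I n k d d' = complex_of_real (c ^ n) * M d d')"
proof (induction n arbitrary: k)
  case 0
  show ?case using isom_idm[OF fin] by (intro exI[of _ idm]) simp
next
  case (Suc n)
  obtain M where M: "isom I M" "\<forall>d\<in>I. \<forall>d'\<in>I. cocycle A T I n (T *v k) d d' = complex_of_real (c ^ n) * M d d'"
    using Suc.IH by blast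
  obtain U where U: "isom I U" "\<forall>d\<in>I. \<forall>d'\<in>I. A k d d' = complex_of_real c * U d d'"
    using hyp by blast
  have "cocycle A T I (Suc n) k d d' = complex_of_real (c ^ Suc n) * mmul I U M d d'"
    if "d \<in> I" "d' \<in> I" for d d'
  proof -
    have "cocycle A T I (Suc n) k d d' = (\<Sum>e\<in>I. A k d e * cocycle A T I n (T *v k) e d')"
      by (simp add: mmul_def)
    also have "\<dots> = (\<Sum>e\<in>I. complex_of_real (c ^ Suc n) * (U d e * M e d'))"
      using U(2) M(2) that by (intro sum.cong refl) (simp add: mult_ac)
    also have "\<dots> = complex_of_real (c ^ Suc n) * mmul I U M d d'"
      by (simp add: mmul_def sum_distrib_left)
    finally show ?thesis .
  qed
  then show ?case using isom_mmul[OF fin U(1) M(1)] by blast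
qed

lemma opnorm_scaled:
  assumes fin: "finite I" and ne: "I \<noteq> {}" and M: "isom I M" and r: "r \<ge> 0"
    and C: "\<forall>i\<in>I. \<forall>j\<in>I. C i j = complex_of_real r * M i j"
  shows "opnorm I C = r"
proof -
  have eq: "sqrt (\<Sum>i\<in>I. (cmod (\<Sum>j\<in>I. C i j * v j))\<^sup>2) = r * sqrt (\<Sum>j\<in>I. (cmod (v j))\<^sup>2)" for v
  proof -
    have "(\<Sum>j\<in>I. C i j * v j) = complex_of_real r * (\<Sum>j\<in>I. M i j * v j)" if "i \<in> I" for i
      using C that by (simp add: sum_distrib_left mult_ac)
    then have "(cmod (\<Sum>j\<in>I. C i j * v j))\<^sup>2 = r\<^sup>2 * (cmod (\<Sum>j\<in>I. M i j * v j))\<^sup>2" if "i \<in> I" for i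
      using r that by (simp add: norm_mult power_mult_distrib)
    then have "(\<Sum>i\<in>I. (cmod (\<Sum>j\<in>I. C i j * v j))\<^sup>2) = r\<^sup>2 * (\<Sum>i\<in>I. (cmod (\<Sum>j\<in>I. M i j * v j))\<^sup>2)"
      by (simp add: sum_distrib_left)
    also have "\<dots> = r\<^sup>2 * (\<Sum>j\<in>I. (cmod (v j))\<^sup>2)" using M unfolding isom_def by simp
    finally show ?thesis using r by (simp add: real_sqrt_mult)
  qed
  obtain d0 where d0: "d0 \<in> I" using ne by blast
  define v0 where "v0 j = (if j = d0 then 1 else 0 :: complex)" for j
  have n0: "(\<Sum>j\<in>I. (cmod (v0 j))\<^sup>2) = 1"
  proof -
    have "(\<Sum>j\<in>I. (cmod (v0 j))\<^sup>2) = (\<Sum>j\<in>I. if j = d0 then 1 else 0)"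
      by (intro sum.cong) (auto simp: v0_def)
    then show ?thesis using fin d0 by simp
  qed
  let ?S = "{sqrt (\<Sum>i\<in>I. (cmod (\<Sum>j\<in>I. C i j * v j))\<^sup>2) | v. (\<Sum>j\<in>I. (cmod (v j))\<^sup>2) \<le> 1}"
  have "r \<in> ?S"
  proof -
    have "r = sqrt (\<Sum>i\<in>I. (cmod (\<Sum>j\<in>I. C i j * v0 j))\<^sup>2)" using eq[of v0] n0 by simp
    then show ?thesis using n0 by force
  qed
  moreover have "x \<le> r" if xS: "x \<in> ?S" for x
  proof -
    obtain v where v: "x = sqrt (\<Sum>i\<in>I. (cmod (\<Sum>j\<in>I. C i j * v j))\<^sup>2)" "(\<Sum>j\<in>I. (cmod (v j))\<^sup>2) \<le> 1"
      using xS by blast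
    have "sqrt (\<Sum>j\<in>I. (cmod (v j))\<^sup>2) \<le> 1" using v(2) by simp
    then show ?thesis using v(1) eq[of v] r by (simp add: mult_left_le)
  qed
  ultimately show ?thesis unfolding opnorm_def by (intro cSup_eq_maximum)
qed


lemma lyap_const:
  fixes A :: "real^'n \<Rightarrow> 'i \<Rightarrow> 'i \<Rightarrow> complex"
  assumes fin: "finite I" and ne: "I \<noteq> {}" and c: "c > 0"
    and hyp: "\<And>k. \<exists>U. isom I U \<and> (\<forall>d\<in>I. \<forall>d'\<in>I. A k d d' = complex_of_real c * U d d')"
  shows "lyapunov A T I k = ereal (ln c)"
proof -
  have "ln (opnorm I (cocycle A T I n k)) / real n = ln c" if "n > 0" for n
  proof -
    obtain M where M: "isom I M" "\<forall>d\<in>I. \<forall>d'\<in>I. cocycle A T I n k d d' = complex_of_real (c ^ n) * M d d'"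
      using cocycle_scaled[where A=A and I=I and c=c and T=T and n=n and k=k, OF fin hyp] by blast
    have "opnorm I (cocycle A T I n k) = c ^ n"
      using opnorm_scaled[OF fin ne M(1) _ M(2)] c by simp
    then show ?thesis using that c by (simp add: ln_realpow)
  qed
  then have "eventually (\<lambda>n. ereal (ln (opnorm I (cocycle A T I n k)) / real n) = ereal (ln c)) sequentially"
    by (intro eventually_sequentiallyI[of 1]) simp
  then have "((\<lambda>n. ereal (ln (opnorm I (cocycle A T I n k)) / real n)) \<longlongrightarrow> ereal (ln c)) sequentially"
    by (rule tendsto_eventually)
  then show ?thesis unfolding lyapunov_def by (intro lim_imp_Limsup) simp_all
qed

lemma ex_unit: "cnj (ex k d) * ex k d = 1"
proof -
  have "norm (ex k d) = 1" by (simp add: ex_def norm_exp_eq_Re)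
  then have "complex_of_real ((norm (ex k d))\<^sup>2) = 1" by simp
  then show ?thesis using complex_norm_square[of "ex k d"] by (simp add: mult.commute)
qed

lemma chi_U:
  fixes D :: "(int^'n) set" and W :: "int^'n \<Rightarrow> int^'n \<Rightarrow> 'g"
  assumes chu: "chi_unitary D W ch" and c: "c = sqrt (real (card D))" "c > 0"
  shows "\<exists>U. unitary_on D D U \<and> (\<forall>d\<in>D. \<forall>d'\<in>D. B_chi W ch k d d' = complex_of_real c * U d d')"
proof -
  define M where "M = (\<lambda>d d'. ch (W d d') / complex_of_real c)"
  have MU: "unitary_on D D M" using chu c(1) by (simp add: chi_unitary_def M_def)
  then have fin: "finite D" by (simp add: unitary_on_def)
  have M1: "(\<Sum>r\<in>D. cnj (M r c1) * M r c2) = idm c1 c2" if "c1 \<in> D" "c2 \<in> D" for c1 c2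
    using MU that by (auto simp: unitary_on_def mmul_def adj_def)
  have M2: "(\<Sum>r\<in>D. M c1 r * cnj (M c2 r)) = idm c1 c2" if "c1 \<in> D" "c2 \<in> D" for c1 c2
    using MU that by (auto simp: unitary_on_def mmul_def adj_def)
  define U where "U d d' = ex k d * M d' d" for d d'
  have "unitary_on D D U"
    unfolding unitary_on_def
  proof (intro conjI ballI fin)
    fix c1 c2 assume cc: "c1 \<in> D" "c2 \<in> D"
    have "mmul D (adj U) U c1 c2 = (\<Sum>r\<in>D. (cnj (ex k r) * ex k r) * (M c2 r * cnj (M c1 r)))"
      by (simp add: mmul_def adj_def U_def mult_ac)
    also have "\<dots> = (\<Sum>r\<in>D. M c2 r * cnj (M c1 r))" by (simp add: ex_unit)
    also have "\<dots> = idm c2 c1" using M2 cc by simp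
    also have "\<dots> = idm c1 c2" by (auto simp: idm_def)
    finally show "mmul D (adj U) U c1 c2 = idm c1 c2" .
  next
    fix r1 r2 assume rr: "r1 \<in> D" "r2 \<in> D"
    have "mmul D U (adj U) r1 r2 = (ex k r1 * cnj (ex k r2)) * (\<Sum>c\<in>D. cnj (M c r2) * M c r1)"
      by (simp add: mmul_def adj_def U_def sum_distrib_left mult_ac)
    also have "\<dots> = (ex k r1 * cnj (ex k r2)) * idm r2 r1" using M1 rr by simp
    also have "\<dots> = idm r1 r2" using ex_unit[of k r2] by (auto simp: idm_def mult.commute)
    finally show "mmul D U (adj U) r1 r2 = idm r1 r2" .
  qed
  moreover have "B_chi W ch k d d' = complex_of_real c * U d d'" for d d'
    using c(2) by (simp add: B_chi_ex U_def M_def)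
  ultimately show ?thesis by blast
qed


theorem proposition4p16:
  fixes Q :: "int^'n^'n"
    and D :: "(int^'n) set"
    and W :: "int^'n \<Rightarrow> int^'n \<Rightarrow> 'g::{ab_group_add, finite}"
  assumes expansive: "expansive Q"
    and reps: "coset_reps Q D"
    and qubit: "CARD('g) = 2"
    and prim: "primitive D W"
    and aper: "aperiodic Q D W"
  shows "(\<exists>V. unitary_on (alphabet D) (dual_group \<times> D) V \<and>
            (\<forall>k. \<forall>x\<in>dual_group \<times> D. \<forall>y\<in>dual_group \<times> D.
               mmul (alphabet D) (adj V) (mmul (alphabet D) (fourier_matrix D W k) V) x y
                 = block_diag (\<lambda>ch. B_chi W ch k) x y))
       \<and> (\<forall>ch\<in>dual_group. chi_unitary D W ch \<longrightarrow>
            (\<forall>k. \<exists>U. unitary_on D D U \<and>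
               (\<forall>d\<in>D. \<forall>d'\<in>D. B_chi W ch k d d' = of_real (sqrt \<bar>det (rmat Q)\<bar>) * U d d'))
          \<and> (\<forall>k. lyapunov (B_chi W ch) (transpose (rmat Q)) D k = ereal (ln (sqrt \<bar>det (rmat Q)\<bar>))))"
proof -
  have ne: "D \<noteq> {}" using reps by (rule reps_nonempty)
  have finD: "finite D" using prim_finite[OF prim ne] .
  have detnz: "det (rmat Q) \<noteq> 0" using det_nz[OF expansive] .
  have card: "real (card D) = \<bar>det (rmat Q)\<bar>" using card_reps_det[OF reps finD detnz] .
  have part1: "\<exists>V. unitary_on (alphabet D) (dual_group \<times> D) V \<and>
            (\<forall>k. \<forall>x\<in>dual_group \<times> D. \<forall>y\<in>dual_group \<times> D.
               mmul (alphabet D) (adj V) (mmul (alphabet D) (fourier_matrix D W k) V) x y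
                 = block_diag (\<lambda>ch. B_chi W ch k) x y)"
    using blockdiag[OF qubit finD, of W] by blast
  define c where "c = sqrt (real (card D))"
  have cpos: "c > 0" using finD ne by (simp add: c_def card_gt_0_iff)
  have cdet: "sqrt \<bar>det (rmat Q)\<bar> = c" using card by (simp add: c_def)
  have part2: "\<forall>ch\<in>dual_group. chi_unitary D W ch \<longrightarrow>
            (\<forall>k. \<exists>U. unitary_on D D U \<and>
               (\<forall>d\<in>D. \<forall>d'\<in>D. B_chi W ch k d d' = of_real (sqrt \<bar>det (rmat Q)\<bar>) * U d d'))
          \<and> (\<forall>k. lyapunov (B_chi W ch) (transpose (rmat Q)) D k = ereal (ln (sqrt \<bar>det (rmat Q)\<bar>)))"
  proof (intro ballI impI conjI allI)
    fix ch :: "'g \<Rightarrow> complex" and k :: "real^'n"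
    assume chu: "chi_unitary D W ch"
    show "\<exists>U. unitary_on D D U \<and>
               (\<forall>d\<in>D. \<forall>d'\<in>D. B_chi W ch k d d' = of_real (sqrt \<bar>det (rmat Q)\<bar>) * U d d')"
      using chi_U[OF chu c_def cpos, of k] unfolding cdet .
    have hyp: "\<exists>U. isom D U \<and> (\<forall>d\<in>D. \<forall>d'\<in>D. B_chi W ch k' d d' = complex_of_real c * U d d')" for k'
      using chi_U[OF chu c_def cpos, of k'] unitary_isom by blast
    show "lyapunov (B_chi W ch) (transpose (rmat Q)) D k = ereal (ln (sqrt \<bar>det (rmat Q)\<bar>))"
      unfolding cdet by (rule lyap_const[OF finD ne cpos hyp])
  qed
  show ?thesis using part1 part2 by blast
qed

end
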